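(* Let $X$ be a CAT(0) Euclidean polygonal complex and let $x_1,x_2,x_3,x_4\in X$. If $\overline{x_1x_2}\cap\overline{x_3x_4}\neq\emptyset$, then $$\overline{x_1x_3}\cap\overline{x_2x_4}\subseteq\overline{x_1x_2}\cap\overline{x_3x_4}\quad\text{and}\quad\overline{x_1x_4}\cap\overline{x_2x_3}\subseteq\overline{x_1x_2}\cap\overline{x_3x_4}.$$ Hence, for $\{i,j,k,l\}=\{i',j',k',l'\}=\{1,2,3,4\}$, we have $\overline{x_ix_j}\cap\overline{x_kx_l}=\overline{x_{i'}x_{j'}}\cap\overline{x_{k'}x_{l'}}$ whenever both intersections are non-empty.
   Context: A CAT(0) Euclidean polygonal complex is a 2-dimensional polygonal complex whose cells are convex Euclidean polygons, with its induced length metric, assumed CAT(0). $\overline{ab}$ denotes the unique geodesic segment between $a$ and $b$. *)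

theory Defs
  imports "HOL-Analysis.Analysis"
begin

definition geodesic :: "'a::metric_space set \<Rightarrow> (real \<Rightarrow> 'a) \<Rightarrow> 'a \<Rightarrow> 'a \<Rightarrow> bool" where
  "geodesic X g a b \<longleftrightarrow> g 0 = a \<and> g (dist a b) = b \<and> g ` {0..dist a b} \<subseteq> X \<and>
     (\<forall>s\<in>{0..dist a b}. \<forall>t\<in>{0..dist a b}. dist (g s) (g t) = \<bar>s - t\<bar>)"

definition geodesic_space :: "'a::metric_space set \<Rightarrow> bool" where
  "geodesic_space X \<longleftrightarrow> (\<forall>a\<in>X. \<forall>b\<in>X. \<exists>g. geodesic X g a b)"

definition cmp_pt :: "real^2 \<Rightarrow> real^2 \<Rightarrow> real \<Rightarrow> real \<Rightarrow> real^2" where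
  "cmp_pt a b t d = (if d = 0 then a else a + (t / d) *\<^sub>R (b - a))"

definition CAT0 :: "'a::metric_space set \<Rightarrow> bool" where
  "CAT0 X \<longleftrightarrow> geodesic_space X \<and>
    (\<forall>x\<in>X. \<forall>y\<in>X. \<forall>z\<in>X. \<forall>g1 g2 g3. \<forall>x' y' z' :: real^2.
      geodesic X g1 x y \<and> geodesic X g2 y z \<and> geodesic X g3 z x \<and>
      dist x' y' = dist x y \<and> dist y' z' = dist y z \<and> dist z' x' = dist z x \<longrightarrow>
      (let T = [(g1, x', y', dist x y), (g2, y', z', dist y z), (g3, z', x', dist z x)] in
       \<forall>(g, a, b, d)\<in>set T. \<forall>(g', a', b', d')\<in>set T.
         \<forall>s\<in>{0..d}. \<forall>t\<in>{0..d'}.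
           dist (g s) (g' t) \<le> dist (cmp_pt a b s d) (cmp_pt a' b' t d')))"

definition seg :: "'a::metric_space set \<Rightarrow> 'a \<Rightarrow> 'a \<Rightarrow> 'a set" where
  "seg X a b = (THE S. \<exists>g. geodesic X g a b \<and> S = g ` {0..dist a b})"

text \<open>Cells are indexed by 'i; cell i is the convex Euclidean polygon shape i in the plane,
  mapped into the space by p i.  Points are glued along faces by isometries.\<close>

definition convex_polygon :: "(real^2) set \<Rightarrow> bool" where
  "convex_polygon P \<longleftrightarrow> polytope P \<and> aff_dim P = 2"

definition isometry_onto :: "(real^2 \<Rightarrow> real^2) \<Rightarrow> (real^2) set \<Rightarrow> (real^2) set \<Rightarrow> bool" where
  "isometry_onto h F G \<longleftrightarrow> h ` F = G \<and> (\<forall>u\<in>F. \<forall>v\<in>F. dist (h u) (h v) = dist u v)"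

text \<open>m-strings: chains of steps (i,a,b) inside cells; consecutive steps meet in X.\<close>
definition chain_ok :: "('i \<Rightarrow> (real^2) set) \<Rightarrow> ('i \<Rightarrow> real^2 \<Rightarrow> 'a) \<Rightarrow> 'a \<Rightarrow> 'a
    \<Rightarrow> ('i \<times> (real^2) \<times> (real^2)) list \<Rightarrow> bool" where
  "chain_ok shape p x y cs \<longleftrightarrow> cs \<noteq> [] \<and>
     (\<forall>(i, a, b)\<in>set cs. a \<in> shape i \<and> b \<in> shape i) \<and>
     (case hd cs of (i, a, b) \<Rightarrow> p i a = x) \<and>
     (case last cs of (i, a, b) \<Rightarrow> p i b = y) \<and>
     (\<forall>k. Suc k < length cs \<longrightarrow>
        (case cs ! k of (i, a, b) \<Rightarrow> p i b) = (case cs ! Suc k of (j, a', b') \<Rightarrow> p j a'))"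

definition chain_len :: "('i \<times> (real^2) \<times> (real^2)) list \<Rightarrow> real" where
  "chain_len cs = sum_list (map (\<lambda>(i, a, b). dist a b) cs)"

definition euclidean_polygonal_complex ::
    "'a::metric_space set \<Rightarrow> ('i \<Rightarrow> (real^2) set) \<Rightarrow> ('i \<Rightarrow> real^2 \<Rightarrow> 'a) \<Rightarrow> bool" where
  "euclidean_polygonal_complex X shape p \<longleftrightarrow>
     (\<forall>i. convex_polygon (shape i)) \<and>
     (\<forall>i. inj_on (p i) (shape i)) \<and>
     X = (\<Union>i. p i ` shape i) \<and>
     (\<forall>i j u v. u \<in> shape i \<and> v \<in> shape j \<and> p i u = p j v \<longrightarrow>
        (\<exists>F G h. F face_of shape i \<and> u \<in> rel_interior F \<and>
                 G face_of shape j \<and> v \<in> rel_interior G \<and>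
                 isometry_onto h F G \<and> (\<forall>w\<in>F. p i w = p j (h w)))) \<and>
     (\<forall>x\<in>X. \<forall>y\<in>X. dist x y = Inf (chain_len ` {cs. chain_ok shape p x y cs}))"

end

theory Submission
  imports Defs
begin


lemma geo_props:
  assumes "geodesic X g a b" "s \<in> {0..dist a b}" "t \<in> {0..dist a b}"
  shows "dist (g s) (g t) = \<bar>s - t\<bar>" "g s \<in> X" "g 0 = a" "g (dist a b) = b"
  using assms unfolding geodesic_def by auto

lemma main_lemma:
  assumes cat: "CAT0 X" and g: "geodesic X g a b" and g1: "geodesic X g1 a p"
    and g2: "geodesic X g2 p b" and X: "a \<in> X" "p \<in> X" "b \<in> X"
    and eq: "dist a p + dist p b = dist a b"
  shows "g (dist a p) = p"
proof -
  define d where "d = dist a b"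
  define g3 where "g3 = (\<lambda>t. g (d - t))"
  have g3: "geodesic X g3 b a"
    using g unfolding geodesic_def g3_def d_def
    by (auto simp: dist_commute image_subset_iff abs_minus_commute)
  define e :: "real^2" where "e = axis 1 1"
  have ne: "norm e = 1" unfolding e_def by simp
  define x' :: "real^2" where "x' = 0"
  define y' where "y' = dist a p *\<^sub>R e"
  define z' where "z' = d *\<^sub>R e"
  have h1: "dist x' y' = dist a p" unfolding x'_def y'_def by (simp add: dist_norm ne)
  have "dist y' z' = \<bar>dist a p - d\<bar>" unfolding y'_def z'_def dist_norm
    by (metis ne mult.right_neutral norm_scaleR real_norm_def scaleR_diff_left)
  then have h2: "dist y' z' = dist p b" using eq zero_le_dist[of p b] d_def by simp
  have h3: "dist z' x' = dist b a" unfolding x'_def z'_def d_def by (simp add: dist_norm ne dist_commute)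
  have all: "\<forall>(gg, u, v, dd)\<in>set [(g1, x', y', dist a p), (g2, y', z', dist p b), (g3, z', x', dist b a)].
       \<forall>(gg', u', v', dd')\<in>set [(g1, x', y', dist a p), (g2, y', z', dist p b), (g3, z', x', dist b a)].
         \<forall>s\<in>{0..dd}. \<forall>t\<in>{0..dd'}.
           dist (gg s) (gg' t) \<le> dist (cmp_pt u v s dd) (cmp_pt u' v' t dd')"
  proof -
    have C: "\<forall>x\<in>X. \<forall>y\<in>X. \<forall>z\<in>X. \<forall>g1 g2 g3. \<forall>x' y' z' :: real^2.
      geodesic X g1 x y \<and> geodesic X g2 y z \<and> geodesic X g3 z x \<and>
      dist x' y' = dist x y \<and> dist y' z' = dist y z \<and> dist z' x' = dist z x \<longrightarrow>
      (let T = [(g1, x', y', dist x y), (g2, y', z', dist y z), (g3, z', x', dist z x)] in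
       \<forall>(g, a, b, d)\<in>set T. \<forall>(g', a', b', d')\<in>set T.
         \<forall>s\<in>{0..d}. \<forall>t\<in>{0..d'}.
           dist (g s) (g' t) \<le> dist (cmp_pt a b s d) (cmp_pt a' b' t d'))"
      using cat unfolding CAT0_def by blast
    have "geodesic X g1 a p \<and> geodesic X g2 p b \<and> geodesic X g3 b a \<and>
      dist x' y' = dist a p \<and> dist y' z' = dist p b \<and> dist z' x' = dist b a" using g1 g2 g3 h1 h2 h3 by blast
    from C[rule_format, OF X(1) X(2) X(3), of g1 g2 g3 x' y' z', OF this]
    show ?thesis unfolding Let_def .
  qed
  have "dist (g1 (dist a p)) (g3 (dist p b)) \<le> dist (cmp_pt x' y' (dist a p) (dist a p)) (cmp_pt z' x' (dist p b) (dist b a))"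
  proof -
    have A: "\<forall>s\<in>{0..dist a p}. \<forall>t\<in>{0..dist b a}. dist (g1 s) (g3 t) \<le> dist (cmp_pt x' y' s (dist a p)) (cmp_pt z' x' t (dist b a))"
      using all by simp
    have "dist p b \<le> dist b a" using eq zero_le_dist[of a p] dist_commute[of b a] by linarith
    then show ?thesis using A by simp
  qed
  moreover have "g1 (dist a p) = p" using g1 unfolding geodesic_def by auto
  moreover have "g3 (dist p b) = g (dist a p)"
  proof -
    have "dist a b - dist p b = dist a p" using eq by linarith
    then show ?thesis unfolding g3_def d_def by simp
  qed
  moreover have "cmp_pt x' y' (dist a p) (dist a p) = y'" unfolding cmp_pt_def x'_def y'_def by auto
  moreover have "cmp_pt z' x' (dist p b) (dist b a) = y'"
  proof (cases "d = 0")
    case True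
    then have "dist a p = 0" using eq zero_le_dist[of p b] zero_le_dist[of a p] d_def by linarith
    then show ?thesis using True unfolding cmp_pt_def x'_def y'_def z'_def d_def by (auto simp: dist_commute)
  next
    case False
    have "z' + (dist p b / d) *\<^sub>R (x' - z') = (d - dist p b) *\<^sub>R e"
      unfolding z'_def x'_def using False by (simp add: algebra_simps)
    also have "d - dist p b = dist a p" using eq d_def by simp
    finally show ?thesis using False unfolding cmp_pt_def y'_def d_def by (simp add: dist_commute)
  qed
  ultimately show ?thesis by simp
qed

lemma seg_char:
  assumes cat: "CAT0 X" and X: "a \<in> X" "b \<in> X"
  shows "seg X a b = {p\<in>X. dist a p + dist p b = dist a b}"
proof -
  have gs: "geodesic_space X" using cat unfolding CAT0_def by auto
  obtain g where g: "geodesic X g a b" using gs X unfolding geodesic_space_def by blast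
  have img: "g ` {0..dist a b} = {p\<in>X. dist a p + dist p b = dist a b}" (is "_ = ?B")
  proof
    show "g ` {0..dist a b} \<subseteq> ?B"
    proof
      fix p assume "p \<in> g ` {0..dist a b}"
      then obtain t where t: "t \<in> {0..dist a b}" "p = g t" by auto
      have "dist a p = t" using geo_props[OF g, of 0 t] t by auto
      moreover have "dist p b = dist a b - t" using geo_props[OF g, of t "dist a b"] t by auto
      moreover have "p \<in> X" using geo_props[OF g] t by auto
      ultimately show "p \<in> ?B" by simp
    qed
  next
    show "?B \<subseteq> g ` {0..dist a b}"
    proof
      fix p assume p: "p \<in> ?B"
      obtain g1 where g1: "geodesic X g1 a p" using gs X p unfolding geodesic_space_def by blast
      obtain g2 where g2: "geodesic X g2 p b" using gs X p unfolding geodesic_space_def by blast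
      have "g (dist a p) = p" using main_lemma[OF cat g g1 g2] X p by auto
      moreover have "dist a p \<in> {0..dist a b}" using p zero_le_dist[of p b] zero_le_dist[of a p] by (clarsimp, linarith)
      ultimately show "p \<in> g ` {0..dist a b}" by (metis rev_image_eqI)
    qed
  qed
  have uniq: "\<And>h. geodesic X h a b \<Longrightarrow> h ` {0..dist a b} = g ` {0..dist a b}"
  proof -
    fix h assume h: "geodesic X h a b"
    have "h ` {0..dist a b} = ?B"
    proof
      show "h ` {0..dist a b} \<subseteq> ?B"
      proof
        fix p assume "p \<in> h ` {0..dist a b}"
        then obtain t where t: "t \<in> {0..dist a b}" "p = h t" by auto
        have "dist a p = t" using geo_props[OF h, of 0 t] t by auto
        moreover have "dist p b = dist a b - t" using geo_props[OF h, of t "dist a b"] t by auto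
        moreover have "p \<in> X" using geo_props[OF h] t by auto
        ultimately show "p \<in> ?B" by simp
      qed
    next
      show "?B \<subseteq> h ` {0..dist a b}"
      proof
        fix p assume p: "p \<in> ?B"
        obtain g1 where g1: "geodesic X g1 a p" using gs X p unfolding geodesic_space_def by blast
        obtain g2 where g2: "geodesic X g2 p b" using gs X p unfolding geodesic_space_def by blast
        have "h (dist a p) = p" using main_lemma[OF cat h g1 g2] X p by auto
        moreover have "dist a p \<in> {0..dist a b}" using p zero_le_dist[of p b] zero_le_dist[of a p] by (clarsimp, linarith)
        ultimately show "p \<in> h ` {0..dist a b}" by (metis rev_image_eqI)
      qed
    qed
    then show "h ` {0..dist a b} = g ` {0..dist a b}" using img by simp
  qed
  have "seg X a b = g ` {0..dist a b}"
    unfolding seg_def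
  proof (rule the_equality)
    show "\<exists>h. geodesic X h a b \<and> g ` {0..dist a b} = h ` {0..dist a b}" using g by blast
  next
    fix S assume "\<exists>h. geodesic X h a b \<and> S = h ` {0..dist a b}"
    then show "S = g ` {0..dist a b}" using uniq by blast
  qed
  then show ?thesis using img by simp
qed


lemma perm_cases:
  fixes F :: "nat \<Rightarrow> nat \<Rightarrow> 'b set"
  assumes s12: "F 2 1 = F 1 2" and s13: "F 3 1 = F 1 3" and s14: "F 4 1 = F 1 4"
    and s23: "F 3 2 = F 2 3" and s24: "F 4 2 = F 2 4" and s34: "F 4 3 = F 3 4"
    and e: "{i,j,k,l} = {1,2,3,4::nat}"
  shows "F i j \<inter> F k l = F 1 2 \<inter> F 3 4 \<or> F i j \<inter> F k l = F 1 3 \<inter> F 2 4 \<or> F i j \<inter> F k l = F 1 4 \<inter> F 2 3"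
proof -
  have hi: "i = 1 \<or> i = 2 \<or> i = 3 \<or> i = 4" using e by blast
  have hj: "j = 1 \<or> j = 2 \<or> j = 3 \<or> j = 4" using e by blast
  have hk: "k = 1 \<or> k = 2 \<or> k = 3 \<or> k = 4" using e by blast
  have hl: "l = 1 \<or> l = 2 \<or> l = 3 \<or> l = 4" using e by blast
  have "card (set [i,j,k,l]) = length [i,j,k,l]" using e by simp
  then have d: "distinct [i,j,k,l]" by (rule card_distinct)
  show ?thesis using hi hj hk hl d
    by (elim disjE; simp only: s12 s13 s14 s23 s24 s34 Int_commute distinct.simps set_simps insert_iff empty_iff list.simps; simp)
qed

definition Bs :: "'a::metric_space set \<Rightarrow> 'a \<Rightarrow> 'a \<Rightarrow> 'a set" where
  "Bs X u v = {q\<in>X. dist u q + dist q v = dist u v}"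

lemma Bs_sym: "Bs X u v = Bs X v u"
  unfolding Bs_def by (auto simp: dist_commute add.commute)

lemma key:
  assumes "Bs X a b \<inter> Bs X c d \<noteq> {}"
  shows "Bs X a c \<inter> Bs X b d \<subseteq> Bs X a b \<inter> Bs X c d"
proof
  obtain q where q: "q \<in> Bs X a b" "q \<in> Bs X c d" using assms by blast
  fix p assume p: "p \<in> Bs X a c \<inter> Bs X b d"
  have q1: "dist a q + dist q b = dist a b" and q2: "dist c q + dist q d = dist c d"
    using q unfolding Bs_def by auto
  have p1: "dist a p + dist p c = dist a c" and p2: "dist b p + dist p d = dist b d" and pX: "p \<in> X"
    using p unfolding Bs_def by auto
  have t1: "dist a b \<le> dist a p + dist p b" by (rule dist_triangle)
  have t2: "dist c d \<le> dist c p + dist p d" by (rule dist_triangle)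
  have t3: "dist a c \<le> dist a q + dist q c" by (rule dist_triangle)
  have t4: "dist b d \<le> dist b q + dist q d" by (rule dist_triangle)
  have c1: "dist p b = dist b p" "dist c p = dist p c" "dist q c = dist c q" "dist b q = dist q b"
    by (simp_all add: dist_commute)
  have "dist a p + dist p b = dist a b" "dist c p + dist p d = dist c d"
    using p1 p2 q1 q2 t1 t2 t3 t4 c1 by linarith+
  then show "p \<in> Bs X a b \<inter> Bs X c d" using pX unfolding Bs_def by auto
qed

lemma ABC:
  assumes "A \<noteq> {} \<Longrightarrow> B \<subseteq> A" "A \<noteq> {} \<Longrightarrow> C \<subseteq> A" "B \<noteq> {} \<Longrightarrow> A \<subseteq> B"
    "B \<noteq> {} \<Longrightarrow> C \<subseteq> B" "C \<noteq> {} \<Longrightarrow> A \<subseteq> C" "C \<noteq> {} \<Longrightarrow> B \<subseteq> C"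
  shows "P \<in> {A, B, C} \<Longrightarrow> Q \<in> {A, B, C} \<Longrightarrow> P \<noteq> {} \<Longrightarrow> Q \<noteq> {} \<Longrightarrow> P = Q"
proof -
  assume "P \<in> {A, B, C}" "Q \<in> {A, B, C}" "P \<noteq> {}" "Q \<noteq> {}"
  then have "(P = A \<or> P = B \<or> P = C)" "(Q = A \<or> Q = B \<or> Q = C)" by simp_all
  then show "P = Q" using assms \<open>P \<noteq> {}\<close> \<open>Q \<noteq> {}\<close>
    by (elim disjE; hypsubst; metis subset_antisym)
qed

theorem lemma8p2:
  fixes shape :: "'i \<Rightarrow> (real^2) set" and p :: "'i \<Rightarrow> real^2 \<Rightarrow> 'a::metric_space"
    and X :: "'a set" and x :: "nat \<Rightarrow> 'a"
  assumes "euclidean_polygonal_complex X shape p"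
    and "CAT0 X"
    and "\<forall>n\<in>{1..4}. x n \<in> X"
  shows "(seg X (x 1) (x 2) \<inter> seg X (x 3) (x 4) \<noteq> {} \<longrightarrow>
           seg X (x 1) (x 3) \<inter> seg X (x 2) (x 4) \<subseteq> seg X (x 1) (x 2) \<inter> seg X (x 3) (x 4) \<and>
           seg X (x 1) (x 4) \<inter> seg X (x 2) (x 3) \<subseteq> seg X (x 1) (x 2) \<inter> seg X (x 3) (x 4))
       \<and> (\<forall>i j k l i' j' k' l'.
            {i, j, k, l} = {1, 2, 3, 4} \<and> {i', j', k', l'} = {1, 2, 3, 4} \<and>
            seg X (x i) (x j) \<inter> seg X (x k) (x l) \<noteq> {} \<and>
            seg X (x i') (x j') \<inter> seg X (x k') (x l') \<noteq> {} \<longrightarrow>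
            seg X (x i) (x j) \<inter> seg X (x k) (x l) = seg X (x i') (x j') \<inter> seg X (x k') (x l'))"
proof -
  define F where "F = (\<lambda>u v. Bs X (x u) (x v))"
  have Fs: "\<And>u v. F u v = F v u" unfolding F_def by (rule Bs_sym)
  have sF: "\<And>u v. u \<in> {1,2,3,4} \<Longrightarrow> v \<in> {1,2,3,4} \<Longrightarrow> seg X (x u) (x v) = F u v"
    unfolding F_def Bs_def using seg_char[OF assms(2)] assms(3) by auto
  define A where "A = F 1 2 \<inter> F 3 4"
  define B where "B = F 1 3 \<inter> F 2 4"
  define C where "C = F 1 4 \<inter> F 2 3"
  have A2: "A = F 1 2 \<inter> F 4 3" unfolding A_def using Fs[of 4 3] by simp
  have B2: "B = F 1 3 \<inter> F 4 2" unfolding B_def using Fs[of 4 2] by simp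
  have C2: "C = F 1 4 \<inter> F 3 2" unfolding C_def using Fs[of 3 2] by simp
  have AB: "A \<noteq> {} \<Longrightarrow> B \<subseteq> A" unfolding A_def B_def F_def by (rule key)
  have AC: "A \<noteq> {} \<Longrightarrow> C \<subseteq> A" unfolding A2 C_def unfolding F_def by (rule key)
  have BA: "B \<noteq> {} \<Longrightarrow> A \<subseteq> B" unfolding A_def B_def F_def by (rule key)
  have BC: "B \<noteq> {} \<Longrightarrow> C \<subseteq> B" unfolding B2 C2 unfolding F_def by (rule key)
  have CA: "C \<noteq> {} \<Longrightarrow> A \<subseteq> C" unfolding A2 C_def unfolding F_def by (rule key)
  have CB: "C \<noteq> {} \<Longrightarrow> B \<subseteq> C" unfolding C2 B2 unfolding F_def by (rule key)
  have part1: "seg X (x 1) (x 2) \<inter> seg X (x 3) (x 4) \<noteq> {} \<longrightarrow>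
           seg X (x 1) (x 3) \<inter> seg X (x 2) (x 4) \<subseteq> seg X (x 1) (x 2) \<inter> seg X (x 3) (x 4) \<and>
           seg X (x 1) (x 4) \<inter> seg X (x 2) (x 3) \<subseteq> seg X (x 1) (x 2) \<inter> seg X (x 3) (x 4)"
    using AB AC unfolding A_def B_def C_def by (simp add: sF)
  have pc: "F i j \<inter> F k l \<in> {A, B, C}" if "{i,j,k,l} = {1,2,3,4::nat}" for i j k l
    using perm_cases[of F, OF Fs Fs Fs Fs Fs Fs that] unfolding A_def B_def C_def by blast
  have part2: "seg X (x i) (x j) \<inter> seg X (x k) (x l) = seg X (x i') (x j') \<inter> seg X (x k') (x l')"
    if h: "{i, j, k, l} = {1, 2, 3, 4}" "{i', j', k', l'} = {1, 2, 3, 4}"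
      "seg X (x i) (x j) \<inter> seg X (x k) (x l) \<noteq> {}"
      "seg X (x i') (x j') \<inter> seg X (x k') (x l') \<noteq> {}" for i j k l i' j' k' l'
  proof -
    have s1: "{i,j,k,l} \<subseteq> {1,2,3,4}" "{i',j',k',l'} \<subseteq> {1,2,3,4}" using h(1,2) by simp_all
    have m: "i \<in> {1,2,3,4}" "j \<in> {1,2,3,4}" "k \<in> {1,2,3,4}" "l \<in> {1,2,3,4}"
      "i' \<in> {1,2,3,4}" "j' \<in> {1,2,3,4}" "k' \<in> {1,2,3,4}" "l' \<in> {1,2,3,4}"
      using s1 by (simp_all only: insert_subset)
    have e1: "seg X (x i) (x j) \<inter> seg X (x k) (x l) = F i j \<inter> F k l" using m sF by simp
    have e2: "seg X (x i') (x j') \<inter> seg X (x k') (x l') = F i' j' \<inter> F k' l'" using m sF by simp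
    have "F i j \<inter> F k l \<in> {A, B, C}" "F i' j' \<inter> F k' l' \<in> {A, B, C}" using pc[OF h(1)] pc[OF h(2)] by simp_all
    moreover have "F i j \<inter> F k l \<noteq> {}" "F i' j' \<inter> F k' l' \<noteq> {}" using h(3,4) e1 e2 by auto
    ultimately show ?thesis unfolding e1 e2 using ABC[OF AB AC BA BC CA CB] by blast
  qed
  show ?thesis
    apply (rule conjI)
     apply (rule part1)
    apply (intro allI impI)
    apply (elim conjE)
    apply (rule part2)
       apply assumption+
    done
qed

end
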